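(* Let $p\colon X\to Y$ be an approximately invertible continuous surjection between (Tychonoff) spaces. If $X$ is a finite $C$-space, then so is $Y$.
   Context: A set is functionally open if it is a cozero set. $X$ is a finite $C$-space if for every sequence $\{\omega_n\}$ of finite covers of $X$ by functionally open sets there exist $k$ and finite families $\gamma_1,\dots,\gamma_k$ of pairwise disjoint functionally open sets such that each $\gamma_n$ refines $\omega_n$ and $\bigcup_{n=1}^k\gamma_n$ covers $X$. A map $p\colon X\to Y$ is approximately invertible if there exists a $C^*$-embedding $i\colon X\to Z$ into a space $Z$ such that for every collection $\mathcal W$ of open subsets of $Z$ refined by $\{i(p^{-1}(y)):y\in Y\}$, there is a continuous map $g\colon Y\to Z$ with $g\circ p$ $\mathcal W$-close to $i$, i.e. each set $\{g(p(x)),i(x)\}$, $x\in X$, is contained in some member of $\mathcal W$. *)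

theory Defs
  imports "HOL-Analysis.Analysis"
begin

definition tychonoff_space :: "'a topology \<Rightarrow> bool" where
  "tychonoff_space X \<longleftrightarrow> completely_regular_space X \<and> Hausdorff_space X"

definition functionally_open :: "'a topology \<Rightarrow> 'a set \<Rightarrow> bool" where
  "functionally_open X U \<longleftrightarrow>
     (\<exists>f. continuous_map X euclideanreal f \<and> U = {x \<in> topspace X. f x \<noteq> 0})"

definition refines :: "'a set set \<Rightarrow> 'a set set \<Rightarrow> bool" where
  "refines \<gamma> \<omega> \<longleftrightarrow> (\<forall>G\<in>\<gamma>. \<exists>W\<in>\<omega>. G \<subseteq> W)"

definition finite_C_space :: "'a topology \<Rightarrow> bool" where
  "finite_C_space X \<longleftrightarrow>
     (\<forall>\<omega> :: nat \<Rightarrow> 'a set set.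
        (\<forall>n. finite (\<omega> n) \<and> (\<forall>U\<in>\<omega> n. functionally_open X U) \<and> \<Union>(\<omega> n) = topspace X)
        \<longrightarrow> (\<exists>k. \<exists>\<gamma> :: nat \<Rightarrow> 'a set set.
               (\<forall>n<k. finite (\<gamma> n) \<and> (\<forall>U\<in>\<gamma> n. functionally_open X U)
                      \<and> pairwise disjnt (\<gamma> n) \<and> refines (\<gamma> n) (\<omega> n))
               \<and> topspace X \<subseteq> \<Union>(\<Union>n<k. \<gamma> n)))"

definition C_star_embedding :: "'a topology \<Rightarrow> 'z topology \<Rightarrow> ('a \<Rightarrow> 'z) \<Rightarrow> bool" where
  "C_star_embedding X Z i \<longleftrightarrow> embedding_map X Z i \<and>
     (\<forall>f. continuous_map (subtopology Z (i ` topspace X)) euclideanreal f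
          \<and> bounded (f ` (i ` topspace X))
          \<longrightarrow> (\<exists>g. continuous_map Z euclideanreal g \<and> bounded (g ` topspace Z)
                   \<and> (\<forall>z\<in>i ` topspace X. g z = f z)))"

definition approx_invertible ::
    "'a topology \<Rightarrow> 'b topology \<Rightarrow> ('a \<Rightarrow> 'b) \<Rightarrow> 'z topology \<Rightarrow> ('a \<Rightarrow> 'z) \<Rightarrow> bool" where
  "approx_invertible X Y p Z i \<longleftrightarrow> tychonoff_space Z \<and> C_star_embedding X Z i \<and>
     (\<forall>\<W>. (\<forall>V\<in>\<W>. openin Z V)
           \<and> refines ((\<lambda>y. i ` {x \<in> topspace X. p x = y}) ` topspace Y) \<W>
           \<longrightarrow> (\<exists>g. continuous_map Y Z g \<and>
                    (\<forall>x\<in>topspace X. \<exists>V\<in>\<W>. {g (p x), i x} \<subseteq> V)))"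

end

theory Submission imports Defs begin

lemma fo_Int:
  assumes "functionally_open X A" "functionally_open X B"
  shows "functionally_open X (A \<inter> B)"
proof -
  obtain f g where f: "continuous_map X euclideanreal f" "A = {x \<in> topspace X. f x \<noteq> 0}"
    and g: "continuous_map X euclideanreal g" "B = {x \<in> topspace X. g x \<noteq> 0}"
    using assms unfolding functionally_open_def by blast
  have "continuous_map X euclideanreal (\<lambda>x. f x * g x)"
    using f g by (intro continuous_intros) auto
  moreover have "A \<inter> B = {x \<in> topspace X. f x * g x \<noteq> 0}" using f g by auto
  ultimately show ?thesis unfolding functionally_open_def by blast
qed

lemma fo_preimage:
  assumes "continuous_map X Y q" "functionally_open Y U"
  shows "functionally_open X {x \<in> topspace X. q x \<in> U}"
proof -
  obtain f where f: "continuous_map Y euclideanreal f" "U = {x \<in> topspace Y. f x \<noteq> 0}"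
    using assms unfolding functionally_open_def by blast
  have "continuous_map X euclideanreal (f \<circ> q)"
    using f assms(1) continuous_map_compose by blast
  moreover have "{x \<in> topspace X. q x \<in> U} = {x \<in> topspace X. (f \<circ> q) x \<noteq> 0}"
    using f assms(1) by (auto simp: continuous_map_def)
  ultimately show ?thesis unfolding functionally_open_def by blast
qed

lemma fo_openin:
  assumes "functionally_open X U" shows "openin X U"
proof -
  obtain f where f: "continuous_map X euclideanreal f" "U = {x \<in> topspace X. f x \<noteq> 0}"
    using assms unfolding functionally_open_def by blast
  have "openin X {x \<in> topspace X. f x \<in> -{0}}"
    using f(1) by (intro openin_continuous_map_preimage) auto
  then show ?thesis using f by simp
qed

lemma fo_nonneg:
  assumes "functionally_open X G"
  shows "\<exists>f. continuous_map X euclideanreal f \<and> (\<forall>x\<in>topspace X. 0 \<le> f x \<and> f x \<le> 1)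
             \<and> G = {x \<in> topspace X. f x \<noteq> 0}"
proof -
  obtain h where h: "continuous_map X euclideanreal h" "G = {x \<in> topspace X. h x \<noteq> 0}"
    using assms unfolding functionally_open_def by blast
  have "continuous_map X euclideanreal (\<lambda>x. min 1 \<bar>h x\<bar>)"
    using h by (intro continuous_intros) auto
  moreover have "G = {x \<in> topspace X. min 1 \<bar>h x\<bar> \<noteq> 0}" using h by auto
  ultimately show ?thesis by (intro exI[of _ "\<lambda>x. min 1 \<bar>h x\<bar>"]) auto
qed

lemma cstar_extend:
  assumes "C_star_embedding X Z i" "continuous_map X euclideanreal f"
    "\<forall>x\<in>topspace X. \<bar>f x\<bar> \<le> 1"
  shows "\<exists>F. continuous_map Z euclideanreal F \<and> (\<forall>x\<in>topspace X. F (i x) = f x)"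
proof -
  have "homeomorphic_map X (subtopology Z (i ` topspace X)) i"
    using assms(1) unfolding C_star_embedding_def embedding_map_def by blast
  then obtain j where j: "homeomorphic_maps X (subtopology Z (i ` topspace X)) i j"
    by (auto simp: homeomorphic_map_maps)
  then have jc: "continuous_map (subtopology Z (i ` topspace X)) X j"
    and ji: "\<And>x. x \<in> topspace X \<Longrightarrow> j (i x) = x"
    by (auto simp: homeomorphic_maps_def)
  have c: "continuous_map (subtopology Z (i ` topspace X)) euclideanreal (f \<circ> j)"
    using jc assms(2) continuous_map_compose by blast
  have "(f \<circ> j) ` (i ` topspace X) \<subseteq> cball 0 1"
    using assms(3) ji by (auto simp: dist_real_def)
  then have "bounded ((f \<circ> j) ` (i ` topspace X))"
    using bounded_cball bounded_subset by blast
  then obtain F where "continuous_map Z euclideanreal F"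
     "\<forall>z\<in>i ` topspace X. F z = (f \<circ> j) z"
    using assms(1) c unfolding C_star_embedding_def by blast
  then show ?thesis using ji by (intro exI[of _ F]) auto
qed

lemma embedding_open:
  assumes "embedding_map X Z i" "openin X A"
  shows "\<exists>H. openin Z H \<and> (\<forall>x\<in>topspace X. i x \<in> H \<longleftrightarrow> x \<in> A)"
proof -
  have hm: "homeomorphic_map X (subtopology Z (i ` topspace X)) i"
    using assms(1) unfolding embedding_map_def by blast
  have inj: "inj_on i (topspace X)" using hm homeomorphic_imp_injective_map by blast
  have "openin (subtopology Z (i ` topspace X)) (i ` A)"
    using hm assms(2) homeomorphic_map_openness_eq by blast
  then obtain H where H: "openin Z H" "i ` A = H \<inter> i ` topspace X"
    by (auto simp: openin_subtopology)
  have sub: "A \<subseteq> topspace X" using assms(2) openin_subset by blast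
  have "\<forall>x\<in>topspace X. i x \<in> H \<longleftrightarrow> x \<in> A"
  proof
    fix x assume x: "x \<in> topspace X"
    show "i x \<in> H \<longleftrightarrow> x \<in> A"
    proof
      assume "i x \<in> H" then have "i x \<in> i ` A" using H x by auto
      then obtain a where "a \<in> A" "i a = i x" by auto
      then show "x \<in> A" using inj x sub inj_onD by fastforce
    next
      assume "x \<in> A" then show "i x \<in> H" using H by auto
    qed
  qed
  then show ?thesis using H by blast
qed

theorem corollary5p3:
  fixes X :: "'a topology" and Y :: "'b topology" and p :: "'a \<Rightarrow> 'b"
    and Z :: "'z topology" and i :: "'a \<Rightarrow> 'z"
  assumes "tychonoff_space X" and "tychonoff_space Y"
    and "continuous_map X Y p" and "p ` topspace X = topspace Y"
    and "approx_invertible X Y p Z i"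
    and "finite_C_space X"
  shows "finite_C_space Y"
  unfolding finite_C_space_def
proof (intro allI impI)
  fix \<omega> :: "nat \<Rightarrow> 'b set set"
  assume om: "\<forall>n. finite (\<omega> n) \<and> (\<forall>U\<in>\<omega> n. functionally_open Y U) \<and> \<Union>(\<omega> n) = topspace Y"
  have pc: "continuous_map X Y p" by fact
  have ai: "tychonoff_space Z" "C_star_embedding X Z i"
    "\<And>\<W>. (\<forall>V\<in>\<W>. openin Z V)
           \<and> refines ((\<lambda>y. i ` {x \<in> topspace X. p x = y}) ` topspace Y) \<W>
           \<Longrightarrow> (\<exists>g. continuous_map Y Z g \<and>
                    (\<forall>x\<in>topspace X. \<exists>V\<in>\<W>. {g (p x), i x} \<subseteq> V))"
    using assms(5) unfolding approx_invertible_def by blast+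
  have emb: "embedding_map X Z i" using ai(2) unfolding C_star_embedding_def by blast
  have icont: "continuous_map X Z i"
  proof -
    have "homeomorphic_map X (subtopology Z (i ` topspace X)) i" using emb unfolding embedding_map_def .
    then have "continuous_map X (subtopology Z (i ` topspace X)) i" by (rule homeomorphic_imp_continuous_map)
    then show ?thesis by (simp add: continuous_map_in_subtopology)
  qed
  define \<omega>' where "\<omega>' n = (\<lambda>W. {x \<in> topspace X. p x \<in> W}) ` \<omega> n" for n
  have om': "\<forall>n. finite (\<omega>' n) \<and> (\<forall>U\<in>\<omega>' n. functionally_open X U) \<and> \<Union>(\<omega>' n) = topspace X"
  proof
    fix n
    have "\<Union>(\<omega>' n) = topspace X"
    proof
      show "\<Union>(\<omega>' n) \<subseteq> topspace X" unfolding \<omega>'_def by auto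
      show "topspace X \<subseteq> \<Union>(\<omega>' n)"
      proof
        fix x assume x: "x \<in> topspace X"
        then have "p x \<in> topspace Y" using continuous_map_image_subset_topspace[OF pc] x by blast
        then obtain W where "W \<in> \<omega> n" "p x \<in> W" using om by blast
        then show "x \<in> \<Union>(\<omega>' n)" using x unfolding \<omega>'_def by blast
      qed
    qed
    then show "finite (\<omega>' n) \<and> (\<forall>U\<in>\<omega>' n. functionally_open X U) \<and> \<Union>(\<omega>' n) = topspace X"
      using om fo_preimage[OF pc] unfolding \<omega>'_def by auto
  qed
  note ex = mp[OF spec[OF assms(6)[unfolded finite_C_space_def], of \<omega>'] om']
  from ex obtain k \<gamma> where
    g1: "\<forall>n<k. finite (\<gamma> n) \<and> (\<forall>U\<in>\<gamma> n. functionally_open X U)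
                      \<and> pairwise disjnt (\<gamma> n) \<and> refines (\<gamma> n) (\<omega>' n)"
    and g2: "topspace X \<subseteq> \<Union>(\<Union>n<k. \<gamma> n)"
    by blast
  have "\<forall>n G. \<exists>W. n < k \<and> G \<in> \<gamma> n \<longrightarrow> W \<in> \<omega> n \<and> G \<subseteq> {x \<in> topspace X. p x \<in> W}"
    using g1 unfolding refines_def \<omega>'_def by blast
  then obtain Wc where Wc: "\<And>n G. n < k \<Longrightarrow> G \<in> \<gamma> n \<Longrightarrow> Wc n G \<in> \<omega> n \<and> G \<subseteq> {x \<in> topspace X. p x \<in> Wc n G}"
    by metis
  have "\<forall>W. \<exists>H. openin Y W \<longrightarrow> openin Z H \<and> (\<forall>x\<in>topspace X. i x \<in> H \<longleftrightarrow> p x \<in> W)"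
  proof
    fix W
    show "\<exists>H. openin Y W \<longrightarrow> openin Z H \<and> (\<forall>x\<in>topspace X. i x \<in> H \<longleftrightarrow> p x \<in> W)"
    proof (cases "openin Y W")
      case True
      then have "openin X {x \<in> topspace X. p x \<in> W}"
        using pc openin_continuous_map_preimage by blast
      then obtain H where "openin Z H" "\<forall>x\<in>topspace X. i x \<in> H \<longleftrightarrow> x \<in> {x \<in> topspace X. p x \<in> W}"
        using embedding_open[OF emb] by blast
      then show ?thesis by auto
    qed auto
  qed
  then obtain Hc where Hc: "\<And>W. openin Y W \<Longrightarrow> openin Z (Hc W) \<and> (\<forall>x\<in>topspace X. i x \<in> Hc W \<longleftrightarrow> p x \<in> W)"
    by metis
  have "\<forall>G. \<exists>F. functionally_open X G \<longrightarrow> continuous_map Z euclideanreal F \<and>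
      (\<forall>x\<in>topspace X. 0 \<le> F (i x) \<and> (F (i x) \<noteq> 0 \<longleftrightarrow> x \<in> G))"
  proof
    fix G
    show "\<exists>F. functionally_open X G \<longrightarrow> continuous_map Z euclideanreal F \<and>
      (\<forall>x\<in>topspace X. 0 \<le> F (i x) \<and> (F (i x) \<noteq> 0 \<longleftrightarrow> x \<in> G))"
    proof (cases "functionally_open X G")
      case True
      then obtain f where f: "continuous_map X euclideanreal f" "\<forall>x\<in>topspace X. 0 \<le> f x \<and> f x \<le> 1"
        "G = {x \<in> topspace X. f x \<noteq> 0}" using fo_nonneg by blast
      then obtain F where "continuous_map Z euclideanreal F" "\<forall>x\<in>topspace X. F (i x) = f x"
        using cstar_extend[OF ai(2) f(1)] by force
      then show ?thesis using f by auto
    qed auto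
  qed
  then obtain F where F: "\<And>G. functionally_open X G \<Longrightarrow> continuous_map Z euclideanreal (F G) \<and>
      (\<forall>x\<in>topspace X. 0 \<le> F G (i x) \<and> (F G (i x) \<noteq> 0 \<longleftrightarrow> x \<in> G))"
    by metis
  define U where "U n G = {z \<in> topspace Z. F G z > (\<Sum>G'\<in>\<gamma> n - {G}. \<bar>F G' z\<bar>)}" for n G
  have Ufo: "functionally_open Z (U n G)" if "n < k" "G \<in> \<gamma> n" for n G
  proof -
    have "continuous_map Z euclideanreal (\<lambda>z. max 0 (F G z - (\<Sum>G'\<in>\<gamma> n - {G}. \<bar>F G' z\<bar>)))"
      using F g1 that by (intro continuous_intros) auto
    moreover have "U n G = {z \<in> topspace Z. max 0 (F G z - (\<Sum>G'\<in>\<gamma> n - {G}. \<bar>F G' z\<bar>)) \<noteq> 0}"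
      unfolding U_def by auto
    ultimately show ?thesis unfolding functionally_open_def by blast
  qed
  have Udisj: "U n G \<inter> U n G' = {}" if "n < k" "G \<in> \<gamma> n" "G' \<in> \<gamma> n" "G \<noteq> G'" for n G G'
  proof (rule ccontr)
    assume "U n G \<inter> U n G' \<noteq> {}"
    then obtain z where z1: "F G z > (\<Sum>H\<in>\<gamma> n - {G}. \<bar>F H z\<bar>)"
      and z2: "F G' z > (\<Sum>H\<in>\<gamma> n - {G'}. \<bar>F H z\<bar>)" unfolding U_def by auto
    have fin: "finite (\<gamma> n)" using g1 that by blast
    have "\<bar>F G' z\<bar> \<le> (\<Sum>H\<in>\<gamma> n - {G}. \<bar>F H z\<bar>)"
      using fin that by (intro member_le_sum) auto
    moreover have "\<bar>F G z\<bar> \<le> (\<Sum>H\<in>\<gamma> n - {G'}. \<bar>F H z\<bar>)"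
      using fin that by (intro member_le_sum) auto
    ultimately show False using z1 z2 by linarith
  qed
  have Umem: "i x \<in> U n G" if "n < k" "G \<in> \<gamma> n" "x \<in> G" for n G x
  proof -
    have fo: "\<forall>H\<in>\<gamma> n. functionally_open X H" using g1 that by blast
    have xX: "x \<in> topspace X" using fo that fo_openin openin_subset by blast
    have "F H (i x) = 0" if "H \<in> \<gamma> n - {G}" for H
    proof -
      have "disjnt G H" using g1 \<open>n<k\<close> \<open>G \<in> \<gamma> n\<close> that unfolding pairwise_def by blast
      then have "x \<notin> H" using \<open>x \<in> G\<close> by (auto simp: disjnt_def)
      then show ?thesis using F[of H] fo that xX by auto
    qed
    then have "(\<Sum>H\<in>\<gamma> n - {G}. \<bar>F H (i x)\<bar>) = 0" by simp
    moreover have "F G (i x) > 0" using F[of G] fo that xX by force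
    moreover have "i x \<in> topspace Z" using continuous_map_image_subset_topspace[OF icont] xX by blast
    ultimately show ?thesis unfolding U_def by auto
  qed
  define S where "S y = {(n, G). n < k \<and> G \<in> \<gamma> n \<and> y \<in> Wc n G}" for y
  define V where "V y = (\<Union>(n, G)\<in>S y. U n G) \<inter> (topspace Z \<inter> \<Inter>((\<lambda>(n, G). Hc (Wc n G)) ` S y))" for y
  have Sfin: "finite (S y)" for y
  proof -
    have "S y \<subseteq> Sigma {..<k} \<gamma>" unfolding S_def by auto
    moreover have "finite (Sigma {..<k} \<gamma>)" using g1 by auto
    ultimately show ?thesis using finite_subset by blast
  qed
  have Wopen: "openin Y (Wc n G)" if "n < k" "G \<in> \<gamma> n" for n G
    using Wc[OF that] om fo_openin by blast
  have Vopen: "openin Z (V y)" for y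
  proof -
    have "openin Z (\<Union>(n, G)\<in>S y. U n G)"
      unfolding S_def by (intro openin_Union) (auto intro!: fo_openin Ufo)
    moreover have "openin Z (topspace Z \<inter> \<Inter>((\<lambda>(n, G). Hc (Wc n G)) ` S y))"
      using Sfin Hc Wopen by (intro openin_Int_Inter) (auto simp: S_def)
    ultimately show ?thesis unfolding V_def by blast
  qed
  define \<W> where "\<W> = V ` topspace Y"
  have "refines ((\<lambda>y. i ` {x \<in> topspace X. p x = y}) ` topspace Y) \<W>"
    unfolding refines_def \<W>_def
  proof
    fix A assume "A \<in> (\<lambda>y. i ` {x \<in> topspace X. p x = y}) ` topspace Y"
    then obtain y where y: "y \<in> topspace Y" "A = i ` {x \<in> topspace X. p x = y}" by blast
    have "A \<subseteq> V y"
    proof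
      fix z assume "z \<in> A"
      then obtain x where x: "x \<in> topspace X" "p x = y" "z = i x" using y by blast
      then obtain n G where nG: "n < k" "G \<in> \<gamma> n" "x \<in> G" using g2 by blast
      have "y \<in> Wc n G" using Wc[OF nG(1,2)] nG x by blast
      then have "(n, G) \<in> S y" unfolding S_def using nG by auto
      then have "z \<in> (\<Union>(n, G)\<in>S y. U n G)" using Umem nG x by blast
      moreover have "z \<in> topspace Z" using continuous_map_image_subset_topspace[OF icont] x by blast
      moreover have "z \<in> Hc (Wc m H)" if "(m, H) \<in> S y" for m H
      proof -
        from that have mH: "m < k" "H \<in> \<gamma> m" "y \<in> Wc m H" unfolding S_def by auto
        then show ?thesis using Hc[OF Wopen[OF mH(1,2)]] x by auto
      qed
      ultimately show "z \<in> V y" unfolding V_def by auto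
    qed
    then show "\<exists>W\<in>V ` topspace Y. A \<subseteq> W" using y by blast
  qed
  moreover have "\<forall>V\<in>\<W>. openin Z V" unfolding \<W>_def using Vopen by blast
  ultimately obtain g where gc: "continuous_map Y Z g"
    and gV: "\<forall>x\<in>topspace X. \<exists>V\<in>\<W>. {g (p x), i x} \<subseteq> V"
    using ai(3)[of \<W>] by blast
  define \<delta> where "\<delta> n = (\<lambda>G. {y \<in> topspace Y. g y \<in> U n G} \<inter> Wc n G) ` \<gamma> n" for n
  show "\<exists>k \<gamma>. (\<forall>n<k. finite (\<gamma> n) \<and> (\<forall>U\<in>\<gamma> n. functionally_open Y U)
                      \<and> pairwise disjnt (\<gamma> n) \<and> refines (\<gamma> n) (\<omega> n))
               \<and> topspace Y \<subseteq> \<Union>(\<Union>n<k. \<gamma> n)"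
  proof (intro exI conjI allI impI)
    fix n assume n: "n < k"
    show "finite (\<delta> n)" unfolding \<delta>_def using g1 n by auto
    show "\<forall>A\<in>\<delta> n. functionally_open Y A"
    proof
      fix A assume "A \<in> \<delta> n"
      then obtain G where G: "G \<in> \<gamma> n" "A = {y \<in> topspace Y. g y \<in> U n G} \<inter> Wc n G"
        unfolding \<delta>_def by blast
      have "Wc n G \<in> \<omega> n" using Wc[OF n G(1)] by blast
      then have "functionally_open Y (Wc n G)" using om by blast
      moreover have "functionally_open Y {y \<in> topspace Y. g y \<in> U n G}"
        using fo_preimage[OF gc Ufo[OF n G(1)]] .
      ultimately show "functionally_open Y A" using G(2) fo_Int by blast
    qed
    show "pairwise disjnt (\<delta> n)"
      unfolding \<delta>_def pairwise_def disjnt_def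
    proof (intro ballI impI)
      fix A B assume "A \<in> (\<lambda>G. {y \<in> topspace Y. g y \<in> U n G} \<inter> Wc n G) ` \<gamma> n"
        "B \<in> (\<lambda>G. {y \<in> topspace Y. g y \<in> U n G} \<inter> Wc n G) ` \<gamma> n" "A \<noteq> B"
      then obtain G G' where "G \<in> \<gamma> n" "G' \<in> \<gamma> n" "G \<noteq> G'"
        "A = {y \<in> topspace Y. g y \<in> U n G} \<inter> Wc n G"
        "B = {y \<in> topspace Y. g y \<in> U n G'} \<inter> Wc n G'" by blast
      then show "A \<inter> B = {}" using Udisj[OF n] by blast
    qed
    show "refines (\<delta> n) (\<omega> n)" unfolding refines_def \<delta>_def using Wc n by blast
  next
    show "topspace Y \<subseteq> \<Union>(\<Union>n<k. \<delta> n)"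
    proof
      fix y assume y: "y \<in> topspace Y"
      then obtain x where x: "x \<in> topspace X" "p x = y" using assms(4) by force
      then obtain y' where y': "g y \<in> V y'" "i x \<in> V y'" using gV unfolding \<W>_def by auto
      then obtain n G where nG: "(n, G) \<in> S y'" "g y \<in> U n G" unfolding V_def by blast
      then have nG2: "n < k" "G \<in> \<gamma> n" unfolding S_def by auto
      have "i x \<in> Hc (Wc n G)" using y' nG unfolding V_def by blast
      then have "y \<in> Wc n G" using Hc[OF Wopen[OF nG2]] x by blast
      then have "y \<in> {y \<in> topspace Y. g y \<in> U n G} \<inter> Wc n G" using y nG by blast
      then show "y \<in> \<Union>(\<Union>n<k. \<delta> n)" unfolding \<delta>_def using nG2 by blast
    qed
  qed
qed

end
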